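(* For $n\ge 1$, the symmetric double star $D_n$ satisfies $\nu^*(D_n)=10n^2+10n+3$.
   Context: For a finite simple graph $G=(V,E)$ with $\ell=|V|+|E|$, a construction sequence (c-sequence) is a bijection $x:\{1,\dots,\ell\}\to V\sqcup E$ such that every edge $e=uw$ satisfies $x^{-1}(e)>\max\{x^{-1}(u),x^{-1}(w)\}$. The cost of $x$ is $\nu(x)=\sum_{e=uw\in E}\big(2x^{-1}(e)-x^{-1}(u)-x^{-1}(w)\big)$, and $\nu^*(G)$ is the maximum of $\nu(x)$ over all c-sequences for $G$. The symmetric double star $D_n$ is the graph formed from two disjoint copies of the star $K_{1,n}$ by adding an edge joining their two hubs. *)

theory Defs
  imports Main
begin

text \<open>The elements of V \<squnion> E are
represented in the sum type: Inl v for a vertex, Inr e for an edge.\<close>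

definition simple_graph :: "'a set \<Rightarrow> 'a set set \<Rightarrow> bool" where
  "simple_graph V E \<longleftrightarrow> finite V \<and> (\<forall>e\<in>E. e \<subseteq> V \<and> card e = 2)"

definition glen :: "'a set \<Rightarrow> 'a set set \<Rightarrow> nat" where
  "glen V E = card V + card E"

definition pos :: "'a set \<Rightarrow> 'a set set \<Rightarrow> (nat \<Rightarrow> 'a + 'a set) \<Rightarrow> ('a + 'a set) \<Rightarrow> nat" where
  "pos V E x z = inv_into {1..glen V E} x z"

definition cseq :: "'a set \<Rightarrow> 'a set set \<Rightarrow> (nat \<Rightarrow> 'a + 'a set) \<Rightarrow> bool" where
  "cseq V E x \<longleftrightarrow>
     bij_betw x {1..glen V E} (Inl ` V \<union> Inr ` E) \<and>
     (\<forall>e\<in>E. \<forall>v\<in>e. pos V E x (Inr e) > pos V E x (Inl v))"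

definition cost :: "'a set \<Rightarrow> 'a set set \<Rightarrow> (nat \<Rightarrow> 'a + 'a set) \<Rightarrow> int" where
  "cost V E x = (\<Sum>e\<in>E. 2 * int (pos V E x (Inr e)) - (\<Sum>v\<in>e. int (pos V E x (Inl v))))"

definition nu_star :: "'a set \<Rightarrow> 'a set set \<Rightarrow> int" where
  "nu_star V E = Max (cost V E ` {x. cseq V E x})"

text \<open>Symmetric double star D_n: two copies (indexed by a bool) of the star K_{1,n}
with hub (b, None) and leaves (b, Some i), i = 1..n, plus the edge joining the hubs.\<close>
definition dstar_V :: "nat \<Rightarrow> (bool \<times> nat option) set" where
  "dstar_V n = {(b, None) | b. True} \<union> {(b, Some i) | b i. i \<in> {1..n}}"

definition dstar_E :: "nat \<Rightarrow> (bool \<times> nat option) set set" where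
  "dstar_E n = {{(b, None), (b, Some i)} | b i. i \<in> {1..n}} \<union> {{(False, None), (True, None)}}"

end

theory Submission
  imports Defs
begin

abbreviation "hubF \<equiv> (False, None :: nat option)"
abbreviation "hubT \<equiv> (True, None :: nat option)"

lemma V_eq: "dstar_V n = {hubF, hubT} \<union> (\<lambda>(b,i). (b, Some i)) ` (UNIV \<times> {1..n})"
proof -
  have 1: "{(b, None) | b. True} = {hubF, hubT}" by (auto; metis (full_types))
  have 2: "{(b, Some i) | b i. i \<in> {1..n}} = (\<lambda>(b,i). (b, Some i)) ` (UNIV \<times> {1..n})"
    by (auto simp: image_iff)
  show ?thesis unfolding dstar_V_def 1 2 ..
qed

lemma L1: "{{(b, None), (b, Some i)} | b i. i \<in> {1..n::nat}} = (\<lambda>(b,i). {(b,None),(b,Some i)}) ` (UNIV \<times> {1..n})"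
proof (rule set_eqI, rule iffI)
  fix e assume "e \<in> {{(b, None), (b, Some i)} | b i. i \<in> {1..n::nat}}"
  then obtain b i where "e = {(b, None), (b, Some i)}" "i \<in> {1..n}" by blast
  then show "e \<in> (\<lambda>(b,i). {(b,None),(b,Some i)}) ` (UNIV \<times> {1..n})"
    by (intro image_eqI[where x="(b,i)"]) auto
next
  fix e assume "e \<in> (\<lambda>(b,i). {(b,None),(b,Some i)}) ` (UNIV \<times> {1..n})"
  then obtain b i where "e = {(b, None), (b, Some i)}" "i \<in> {1..n}" by (auto simp: image_iff)
  then show "e \<in> {{(b, None), (b, Some i)} | b i. i \<in> {1..n::nat}}" by blast
qed
lemma E_eq: "dstar_E n = (\<lambda>(b,i). {(b,None),(b,Some i)}) ` (UNIV \<times> {1..n}) \<union> {{hubF, hubT}}"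
  unfolding dstar_E_def L1 ..

lemma fin_V: "finite (dstar_V n)" by (simp add: V_eq)
lemma fin_E: "finite (dstar_E n)" by (simp add: E_eq)

lemma sum_bool_nat: "(\<Sum>z\<in>(UNIV::bool set) \<times> {1..n}. g z) = (\<Sum>i=1..n. g (False, i) + g (True, i))"
proof -
  have "(\<Sum>z\<in>(UNIV::bool set) \<times> {1..n}. g z) = (\<Sum>b\<in>UNIV. \<Sum>i=1..n. g (b, i))"
    by (simp add: sum.cartesian_product)
  also have "\<dots> = (\<Sum>i=1..n. g (False, i) + g (True, i))"
    by (simp add: UNIV_bool sum.distrib)
  finally show ?thesis .
qed

lemma sumV: "(\<Sum>v\<in>dstar_V n. (f v :: 'b::comm_monoid_add)) = f hubF + f hubT + (\<Sum>i=1..n. f (False, Some i) + f (True, Some i))"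
proof -
  have inj: "inj_on (\<lambda>(b,i). (b, Some i)) (UNIV \<times> {1..n::nat})" by (auto simp: inj_on_def)
  have "(\<Sum>v\<in>dstar_V n. f v) = (\<Sum>v\<in>{hubF, hubT}. f v) + (\<Sum>v\<in>(\<lambda>(b,i). (b, Some i)) ` (UNIV \<times> {1..n}). f v)"
    unfolding V_eq by (rule sum.union_disjoint) auto
  also have "(\<Sum>v\<in>(\<lambda>(b,i). (b, Some i)) ` (UNIV \<times> {1..n}). f v) = (\<Sum>z\<in>UNIV \<times> {1..n}. f (case z of (b,i) \<Rightarrow> (b, Some i)))"
    by (subst sum.reindex[OF inj]) (simp add: comp_def)
  also have "\<dots> = (\<Sum>i=1..n. f (False, Some i) + f (True, Some i))"
    by (subst sum_bool_nat) simp
  finally show ?thesis by (simp add: add.assoc)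
qed

lemma sumE: "(\<Sum>e\<in>dstar_E n. (g e :: 'b::comm_monoid_add)) = g {hubF, hubT} + (\<Sum>i=1..n. g {hubF, (False, Some i)} + g {hubT, (True, Some i)})"
proof -
  have inj: "inj_on (\<lambda>(b,i). {(b,None),(b, Some i)}) (UNIV \<times> {1..n::nat})"
    by (auto simp: inj_on_def doubleton_eq_iff)
  have "(\<Sum>e\<in>dstar_E n. g e) = (\<Sum>e\<in>(\<lambda>(b,i). {(b,None),(b, Some i)}) ` (UNIV \<times> {1..n}). g e) + (\<Sum>e\<in>{{hubF, hubT}}. g e)"
    unfolding E_eq by (rule sum.union_disjoint) (auto simp: doubleton_eq_iff)
  also have "(\<Sum>e\<in>(\<lambda>(b,i). {(b,None),(b, Some i)}) ` (UNIV \<times> {1..n}). g e) = (\<Sum>z\<in>UNIV \<times> {1..n}. g (case z of (b,i) \<Rightarrow> {(b,None),(b, Some i)}))"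
    by (subst sum.reindex[OF inj]) (simp add: comp_def)
  also have "\<dots> = (\<Sum>i=1..n. g {hubF, (False, Some i)} + g {hubT, (True, Some i)})"
    by (subst sum_bool_nat) simp
  finally show ?thesis by (simp add: add.commute)
qed

lemma card_V: "card (dstar_V n) = 2*n+2"
proof -
  have "card (dstar_V n) = (\<Sum>v\<in>dstar_V n. 1::nat)" by simp
  also have "\<dots> = 2*n+2" by (subst sumV) simp
  finally show ?thesis .
qed

lemma card_E: "card (dstar_E n) = 2*n+1"
proof -
  have "card (dstar_E n) = (\<Sum>v\<in>dstar_E n. 1::nat)" by simp
  also have "\<dots> = 2*n+1" by (subst sumE) simp
  finally show ?thesis .
qed

lemma glen_D: "glen (dstar_V n) (dstar_E n) = 4*n+3"
  by (simp add: glen_def card_V card_E)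

lemma gauss: "2 * (\<Sum>k=1..m. int k) = int m * (int m + 1)"
  by (induction m) (auto simp: algebra_simps)

lemma sum_pos_lower:
  assumes "finite B" "0 \<notin> B"
  shows "int (card B) * (int (card B) + 1) \<le> 2 * (\<Sum>b\<in>B. int b)"
  using assms
proof (induction "card B" arbitrary: B)
  case 0
  then show ?case by simp
next
  case (Suc k)
  hence ne: "B \<noteq> {}" by auto
  define m where "m = Max B"
  have mB: "m \<in> B" using Suc.prems ne by (simp add: m_def)
  have b1: "\<And>b. b \<in> B \<Longrightarrow> 1 \<le> b" using Suc.prems(2) by (metis One_nat_def Suc_leI neq0_conv)
  have sub: "B \<subseteq> {1..m}" using Suc.prems b1 by (auto simp: m_def)
  have "card B \<le> m" using card_mono[OF _ sub] by simp
  have ck: "card (B - {m}) = k" using Suc.hyps(2) mB Suc.prems by simp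
  have IH: "int k * (int k + 1) \<le> 2 * (\<Sum>b\<in>B - {m}. int b)"
    using Suc.hyps(1)[of "B - {m}"] ck Suc.prems by simp
  have S: "(\<Sum>b\<in>B. int b) = int m + (\<Sum>b\<in>B - {m}. int b)"
    using sum.remove[OF Suc.prems(1) mB] by simp
  have cB: "card B = Suc k" using Suc.hyps(2) by simp
  have E: "int (card B) * (int (card B) + 1) = int k * (int k + 1) + 2 * (int k + 1)"
    using cB by (simp add: algebra_simps)
  have M: "int k + 1 \<le> int m" using \<open>card B \<le> m\<close> cB by simp
  show ?case unfolding E S using IH M by (smt (verit))
qed

lemma sumEV: "(\<Sum>e\<in>dstar_E n. \<Sum>v\<in>e. (f v :: int)) = int n * (f hubF + f hubT) + (\<Sum>v\<in>dstar_V n. f v)"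
  by (simp add: sumE sumV sum.distrib algebra_simps)

lemma cost_formula:
  fixes x n
  defines "V \<equiv> dstar_V n" and "E \<equiv> dstar_E n"
  assumes bij: "bij_betw x {1..glen V E} (Inl ` V \<union> Inr ` E)"
  shows "cost V E x = 2*(int(4*n+3)*int(2*n+2)) - 3*(\<Sum>v\<in>V. int(pos V E x (Inl v)))
            - int n*(int(pos V E x (Inl hubF)) + int(pos V E x (Inl hubT)))"
    and "(\<Sum>v\<in>V. int(pos V E x (Inl v))) \<le> int(4*n+3)*int(2*n+2)"
    and "bij_betw (pos V E x) (Inl ` V \<union> Inr ` E) {1..4*n+3}"
proof -
  define p where "p = pos V E x"
  define I where "I = Inl ` V \<union> Inr ` E"
  have gl: "glen V E = 4*n+3" unfolding V_def E_def by (rule glen_D)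
  have bp: "bij_betw p I {1..4*n+3}"
    using bij_betw_inv_into[OF bij] unfolding p_def pos_def I_def gl .
  then show "bij_betw (pos V E x) (Inl ` V \<union> Inr ` E) {1..4*n+3}" unfolding p_def I_def .
  have tot: "(\<Sum>z\<in>I. int (p z)) = (\<Sum>k\<in>{1..4*n+3}. int k)"
    using sum.reindex_bij_betw[OF bp, of int] .
  have fV: "finite V" and fE: "finite E" unfolding V_def E_def by (rule fin_V, rule fin_E)
  have split: "(\<Sum>z\<in>I. int (p z)) = (\<Sum>v\<in>V. int (p (Inl v))) + (\<Sum>e\<in>E. int (p (Inr e)))"
    unfolding I_def
    by (subst sum.union_disjoint) (auto simp: fV fE sum.reindex)
  have g: "2 * (\<Sum>k\<in>{1..4*n+3}. int k) = int (4*n+3) * (int (4*n+3) + 1)" by (rule gauss)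
  have S: "(\<Sum>v\<in>V. int (p (Inl v))) + (\<Sum>e\<in>E. int (p (Inr e))) = int(4*n+3)*int(2*n+2)"
    using tot split g by (simp add: algebra_simps)
  have nonneg: "0 \<le> (\<Sum>e\<in>E. int (p (Inr e)))" by (simp add: sum_nonneg)
  show "(\<Sum>v\<in>V. int(pos V E x (Inl v))) \<le> int(4*n+3)*int(2*n+2)"
    using S nonneg unfolding p_def by linarith
  have c: "cost V E x = 2 * (\<Sum>e\<in>E. int (p (Inr e))) - (\<Sum>e\<in>E. \<Sum>v\<in>e. int (p (Inl v)))"
    unfolding cost_def p_def by (simp add: sum_subtractf sum_distrib_left)
  have ev: "(\<Sum>e\<in>E. \<Sum>v\<in>e. int (p (Inl v))) = int n * (int (p (Inl hubF)) + int (p (Inl hubT))) + (\<Sum>v\<in>V. int (p (Inl v)))"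
    unfolding E_def V_def by (rule sumEV)
  show "cost V E x = 2*(int(4*n+3)*int(2*n+2)) - 3*(\<Sum>v\<in>V. int(pos V E x (Inl v)))
            - int n*(int(pos V E x (Inl hubF)) + int(pos V E x (Inl hubT)))"
    using c ev S unfolding p_def by linarith
qed

lemma cost_bounds:
  fixes x n
  defines "V \<equiv> dstar_V n" and "E \<equiv> dstar_E n"
  assumes bij: "bij_betw x {1..glen V E} (Inl ` V \<union> Inr ` E)"
  shows "cost V E x \<le> 10 * int n ^ 2 + 10 * int n + 3"
    and "cost V E x \<ge> - (int(4*n+3)*int(2*n+2)) - int n * (8 * int n + 6)"
proof -
  define p where "p = pos V E x"
  define I where "I = Inl ` V \<union> Inr ` E"
  note cf = cost_formula[of x n, folded V_def E_def, OF bij, folded p_def I_def]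
  have bp: "bij_betw p I {1..4*n+3}" using cf(3) .
  have inj: "inj_on p I" and im: "p ` I = {1..4*n+3}" using bp by (auto simp: bij_betw_def)
  have hF: "Inl hubF \<in> I" and hT: "Inl hubT \<in> I" unfolding I_def V_def dstar_V_def by auto
  have a1: "p (Inl hubF) \<in> {1..4*n+3}" using hF im by blast
  have b1: "p (Inl hubT) \<in> {1..4*n+3}" using hT im by blast
  have ab: "p (Inl hubF) \<noteq> p (Inl hubT)" using inj hF hT by (auto dest: inj_onD)
  have ab3: "3 \<le> int (p (Inl hubF)) + int (p (Inl hubT))" using a1 b1 ab by auto
  have abu: "int (p (Inl hubF)) + int (p (Inl hubT)) \<le> 8 * int n + 6" using a1 b1 by auto
  define B where "B = (\<lambda>v. p (Inl v)) ` V"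
  have injV: "inj_on (\<lambda>v. p (Inl v)) V"
    using inj unfolding I_def by (auto simp: inj_on_def)
  have fV: "finite V" unfolding V_def by (rule fin_V)
  have cB: "card B = 2*n+2" unfolding B_def using card_image[OF injV] card_V V_def by simp
  have B0: "0 \<notin> B" unfolding B_def I_def using im I_def by force
  have sB: "(\<Sum>v\<in>V. int (p (Inl v))) = (\<Sum>b\<in>B. int b)"
    unfolding B_def by (simp add: sum.reindex[OF injV])
  have low: "int (2*n+2) * (int (2*n+2) + 1) \<le> 2 * (\<Sum>v\<in>V. int (p (Inl v)))"
    using sum_pos_lower[of B] B0 cB sB fV B_def by simp
  have m1: "int n * 3 \<le> int n * (int (p (Inl hubF)) + int (p (Inl hubT)))"
    using ab3 by (intro mult_left_mono) auto
  have m2: "int n * (int (p (Inl hubF)) + int (p (Inl hubT))) \<le> int n * (8 * int n + 6)"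
    using abu by (intro mult_left_mono) auto
  have e1: "int (2*n+2) * (int (2*n+2) + 1) = 4 * int n ^ 2 + 10 * int n + 6" by (simp add: algebra_simps power2_eq_square)
  have e2: "int(4*n+3)*int(2*n+2) = 8 * int n ^ 2 + 14 * int n + 6" by (simp add: algebra_simps power2_eq_square)
  show "cost V E x \<le> 10 * int n ^ 2 + 10 * int n + 3"
    using cf(1) low m1 e1 e2 by linarith
  show "cost V E x \<ge> - (int(4*n+3)*int(2*n+2)) - int n * (8 * int n + 6)"
    using cf(1) cf(2) m2 by linarith
qed

definition leafval :: "nat \<Rightarrow> bool \<times> nat option \<Rightarrow> nat" where
  "leafval n v = (case snd v of None \<Rightarrow> 0 | Some i \<Rightarrow> if fst v then n + i else i)"

definition qpos :: "nat \<Rightarrow> (bool \<times> nat option) + (bool \<times> nat option) set \<Rightarrow> nat" where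
  "qpos n z = (case z of Inl v \<Rightarrow> (case snd v of None \<Rightarrow> if fst v then 2 else 1 | Some _ \<Rightarrow> 2 + leafval n v)
     | Inr e \<Rightarrow> 2*n+3 + (\<Sum>w\<in>e. leafval n w))"

lemma q1: "qpos n (Inl hubF) = 1" and q2: "qpos n (Inl hubT) = 2"
  and q3: "qpos n (Inl (False, Some i)) = 2 + i" and q4: "qpos n (Inl (True, Some i)) = n + 2 + i"
  and q5: "qpos n (Inr {hubF, hubT}) = 2*n+3"
  and q6: "qpos n (Inr {hubF, (False, Some i)}) = 2*n+3+i"
  and q7: "qpos n (Inr {hubT, (True, Some i)}) = 3*n+3+i"
  by (simp_all add: qpos_def leafval_def)

lemma memV: "v \<in> dstar_V n \<longleftrightarrow> v = (False, None) \<or> v = (True, None) \<or> (\<exists>i\<in>{1..n}. v = (False,Some i) \<or> v = (True,Some i))"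
  unfolding dstar_V_def by (cases v; cases "fst v"; auto)
lemma memE: "e \<in> dstar_E n \<longleftrightarrow> e = {(False, None), (True, None)} \<or> (\<exists>i\<in>{1..n}. e = {(False, None),(False,Some i)} \<or> e = {(True, None),(True,Some i)})"
proof
  assume "e \<in> dstar_E n" then show "e = {(False, None), (True, None)} \<or> (\<exists>i\<in>{1..n}. e = {(False, None),(False,Some i)} \<or> e = {(True, None),(True,Some i)})"
  proof (unfold dstar_E_def, elim UnE)
    assume "e \<in> {{(b, None), (b, Some i)} |b i. i \<in> {1..n}}"
    then obtain b i where bi: "e = {(b, None), (b, Some i)}" "i \<in> {1..n}" unfolding mem_Collect_eq by (elim exE conjE) (rule that)
    then show ?thesis by (cases b) (rule disjI2, rule bexI[of _ i], simp, simp)+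
  qed simp
next
  assume "e = {(False, None), (True, None)} \<or> (\<exists>i\<in>{1..n}. e = {(False, None),(False,Some i)} \<or> e = {(True, None),(True,Some i)})"
  then show "e \<in> dstar_E n" unfolding dstar_E_def by blast
qed

lemma memI: "z \<in> Inl ` dstar_V n \<union> Inr ` dstar_E n \<longleftrightarrow>
   z = Inl hubF \<or> z = Inl hubT \<or> z = Inr {hubF, hubT} \<or>
   (\<exists>i\<in>{1..n}. z = Inl (False, Some i) \<or> z = Inl (True, Some i) \<or>
       z = Inr {hubF, (False, Some i)} \<or> z = Inr {hubT, (True, Some i)})"
  by (cases z) (simp_all add: memV memE image_iff)

lemma inI1: "Inl hubF \<in> Inl ` dstar_V n \<union> Inr ` dstar_E n"
  and inI2: "Inl hubT \<in> Inl ` dstar_V n \<union> Inr ` dstar_E n"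
  and inI5: "Inr {hubF, hubT} \<in> Inl ` dstar_V n \<union> Inr ` dstar_E n"
  by (simp_all add: memV memE)

lemma inI3: "i \<in> {1..n} \<Longrightarrow> Inl (False, Some i) \<in> Inl ` dstar_V n \<union> Inr ` dstar_E n"
  and inI4: "i \<in> {1..n} \<Longrightarrow> Inl (True, Some i) \<in> Inl ` dstar_V n \<union> Inr ` dstar_E n"
  by (rule UnI1, rule imageI, unfold memV, (rule disjI2)+, rule bexI[of _ i], simp, simp)+

lemma inI6: "i \<in> {1..n} \<Longrightarrow> Inr {hubF, (False, Some i)} \<in> Inl ` dstar_V n \<union> Inr ` dstar_E n"
  and inI7: "i \<in> {1..n} \<Longrightarrow> Inr {hubT, (True, Some i)} \<in> Inl ` dstar_V n \<union> Inr ` dstar_E n"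
  by (rule UnI2, rule imageI, unfold memE, rule disjI2, rule bexI[of _ i], simp, simp)+

lemma card_I: "card (Inl ` dstar_V n \<union> Inr ` dstar_E n) = 4*n+3"
  by (subst card_Un_disjoint) (auto simp: fin_V fin_E card_image card_V card_E)

lemma im_q: "qpos n ` (Inl ` dstar_V n \<union> Inr ` dstar_E n) = {1..4*n+3}"
proof
  show "qpos n ` (Inl ` dstar_V n \<union> Inr ` dstar_E n) \<subseteq> {1..4*n+3}"
  proof
    fix k assume "k \<in> qpos n ` (Inl ` dstar_V n \<union> Inr ` dstar_E n)"
    then obtain z where z: "z \<in> Inl ` dstar_V n \<union> Inr ` dstar_E n" "k = qpos n z" by blast
    then show "k \<in> {1..4*n+3}" unfolding memI
      by (elim disjE bexE) (auto simp: q1 q2 q3 q4 q5 q6 q7)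
  qed
next
  show "{1..4*n+3} \<subseteq> qpos n ` (Inl ` dstar_V n \<union> Inr ` dstar_E n)"
  proof
    fix k assume k: "k \<in> {1..4*n+3}"
    let ?I = "Inl ` dstar_V n \<union> Inr ` dstar_E n"
    have "\<exists>z\<in>?I. qpos n z = k"
    proof -
      consider "k = 1" | "k = 2" | "3 \<le> k \<and> k \<le> n+2" | "n+3 \<le> k \<and> k \<le> 2*n+2" | "k = 2*n+3"
        | "2*n+4 \<le> k \<and> k \<le> 3*n+3" | "3*n+4 \<le> k \<and> k \<le> 4*n+3" using k by force
      then show ?thesis
      proof cases
        case 1 then show ?thesis using inI1[of n] by (intro bexI) (auto simp: q1)
      next
        case 2 then show ?thesis using inI2[of n] by (intro bexI) (auto simp: q2)
      next
        case 3 then show ?thesis by (intro bexI[of _ "Inl (False, Some (k-2))"] inI3) (use 3 in \<open>auto simp: q3\<close>)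
      next
        case 4 then show ?thesis by (intro bexI[of _ "Inl (True, Some (k-n-2))"] inI4) (use 4 in \<open>auto simp: q4\<close>)
      next
        case 5 then show ?thesis using inI5[of n] by (intro bexI) (auto simp: q5)
      next
        case 6 then show ?thesis by (intro bexI[of _ "Inr {hubF, (False, Some (k-2*n-3))}"] inI6) (use 6 in \<open>auto simp: q6\<close>)
      next
        case 7 then show ?thesis by (intro bexI[of _ "Inr {hubT, (True, Some (k-3*n-3))}"] inI7) (use 7 in \<open>auto simp: q7\<close>)
      qed
    qed
    then show "k \<in> qpos n ` ?I" by (metis image_eqI)
  qed
qed

lemma bij_q: "bij_betw (qpos n) (Inl ` dstar_V n \<union> Inr ` dstar_E n) {1..4*n+3}"
proof -
  have "inj_on (qpos n) (Inl ` dstar_V n \<union> Inr ` dstar_E n)"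
    by (subst inj_on_iff_eq_card) (auto simp: fin_V fin_E im_q card_I)
  then show ?thesis by (simp add: bij_betw_def im_q)
qed

definition xopt :: "nat \<Rightarrow> nat \<Rightarrow> (bool \<times> nat option) + (bool \<times> nat option) set" where
  "xopt n = inv_into (Inl ` dstar_V n \<union> Inr ` dstar_E n) (qpos n)"

lemma xopt_bij: "bij_betw (xopt n) {1..glen (dstar_V n) (dstar_E n)} (Inl ` dstar_V n \<union> Inr ` dstar_E n)"
  unfolding xopt_def glen_D by (rule bij_betw_inv_into[OF bij_q])

lemma pos_xopt: "z \<in> Inl ` dstar_V n \<union> Inr ` dstar_E n \<Longrightarrow> pos (dstar_V n) (dstar_E n) (xopt n) z = qpos n z"
  unfolding pos_def glen_D xopt_def by (rule inv_into_inv_into_eq[OF bij_q])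

lemma xopt_cseq: "cseq (dstar_V n) (dstar_E n) (xopt n)"
  unfolding cseq_def
proof (intro conjI xopt_bij ballI)
  fix e v assume e: "e \<in> dstar_E n" and v: "v \<in> e"
  have eI: "Inr e \<in> Inl ` dstar_V n \<union> Inr ` dstar_E n" using e by blast
  have "e \<subseteq> dstar_V n" using e unfolding memE
    by (elim disjE bexE) (simp_all add: memV)
  then have vI: "Inl v \<in> Inl ` dstar_V n \<union> Inr ` dstar_E n" using v by blast
  have "qpos n (Inl v) < qpos n (Inr e)"
    using e unfolding memE
  proof (elim disjE bexE)
    assume "e = {hubF, hubT}" then show ?thesis using v by (auto simp: q1 q2 q5)
  next
    fix i assume "i \<in> {1..n}" "e = {hubF, (False, Some i)}"
    then show ?thesis using v by (auto simp: q1 q3 q6)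
  next
    fix i assume "i \<in> {1..n}" "e = {hubT, (True, Some i)}"
    then show ?thesis using v by (auto simp: q2 q4 q7)
  qed
  then show "pos (dstar_V n) (dstar_E n) (xopt n) (Inl v) < pos (dstar_V n) (dstar_E n) (xopt n) (Inr e)"
    using pos_xopt[OF eI] pos_xopt[OF vI] by simp
qed

lemma xopt_cost: "cost (dstar_V n) (dstar_E n) (xopt n) = 10 * int n ^ 2 + 10 * int n + 3"
proof -
  note cf = cost_formula(1)[OF xopt_bij]
  have hF: "pos (dstar_V n) (dstar_E n) (xopt n) (Inl hubF) = 1" using pos_xopt[OF inI1] q1 by simp
  have hT: "pos (dstar_V n) (dstar_E n) (xopt n) (Inl hubT) = 2" using pos_xopt[OF inI2] q2 by simp
  have "(\<Sum>v\<in>dstar_V n. int (pos (dstar_V n) (dstar_E n) (xopt n) (Inl v))) = (\<Sum>v\<in>dstar_V n. int (qpos n (Inl v)))"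
    by (rule sum.cong) (auto simp: pos_xopt)
  also have "\<dots> = 3 + (\<Sum>i=1..n. int (2 + i) + int (n + 2 + i))"
    by (simp add: sumV q1 q2 q3 q4)
  also have "(\<Sum>i=1..n. int (2 + i) + int (n + 2 + i)) = (\<Sum>i=1..n. (int n + 4) + 2 * int i)"
    by (rule sum.cong) auto
  also have "\<dots> = int n * (int n + 4) + 2 * (\<Sum>i=1..n. int i)"
    by (simp add: sum.distrib sum_distrib_left)
  also have "\<dots> = int n * (int n + 4) + int n * (int n + 1)" using gauss[of n] by simp
  finally have sv: "(\<Sum>v\<in>dstar_V n. int (pos (dstar_V n) (dstar_E n) (xopt n) (Inl v))) = 3 + (int n * (int n + 4) + int n * (int n + 1))" .
  show ?thesis unfolding cf sv hF hT by (simp add: algebra_simps power2_eq_square)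
qed

theorem theorem6:
  fixes n :: nat
  assumes "n \<ge> 1"
  shows "nu_star (dstar_V n) (dstar_E n) = 10 * int n ^ 2 + 10 * int n + 3"
proof -
  let ?C = "cost (dstar_V n) (dstar_E n) ` {x. cseq (dstar_V n) (dstar_E n) x}"
  have sub: "?C \<subseteq> {- (int(4*n+3)*int(2*n+2)) - int n * (8 * int n + 6) .. 10 * int n ^ 2 + 10 * int n + 3}"
    using cost_bounds unfolding cseq_def by fastforce
  have fin: "finite ?C" by (rule finite_subset[OF sub]) simp
  show ?thesis unfolding nu_star_def
  proof (rule Max_eqI[OF fin])
    fix y assume "y \<in> ?C" then show "y \<le> 10 * int n ^ 2 + 10 * int n + 3" using sub by auto
  next
    show "10 * int n ^ 2 + 10 * int n + 3 \<in> ?C"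
      using xopt_cseq xopt_cost by (metis (mono_tags) image_eqI mem_Collect_eq)
  qed
qed

end
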